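(* For every nondeterministic multihead finite automaton $\mathcal M$ with input alphabet $\Sigma$ there is an interpretation $\pi:\Gamma_2\to\Sigma$ such that for every sufficiently long string $x\in\Sigma^\star$, the structure $x^\pi$ is isomorphic to the configuration graph of $\mathcal M$ on input $x$ (as a 2-pointed directed graph). Furthermore, $\pi$ can be expanded to an interpretation $\pi:(\Gamma_2,S)\to\Sigma$ such that $x^\pi$ is a successor expansion of that configuration graph. Moreover, $\pi$ can be taken quantifier-free.
   Context: A nondeterministic multihead finite automaton (NMFA) consists of a finite set $Q$ of states, a number $k$ of heads, an input alphabet $\Sigma$, a start state $q_0$, an accept state $q_f$, and a transition relation $\delta$ which, depending on the current state and the $k$-tuple of symbols in $\Sigma\cup\{\triangleright,\triangleleft\}$ read by the heads, allows a new state and a move vector in $\{-1,0,1\}^k$. The tape holds the input string between a left endmarker $\triangleright$ and a right endmarker $\triangleleft$; heads cannot write; a head reading $\triangleright$ (resp. $\triangleleft$) never moves left (resp. right); in state $q_f$ the transitions move every head left if possible and otherwise keep it in place. A configuration on input $x$ consists of the current state and the positions of the heads. The configuration graph on input $x$ is the 2-pointed directed graph whose vertices are the configurations on $x$, with an edge from $c$ to $c'$ iff $c'$ is reachable from $c$ in one step, and whose distinguished vertices $s,t$ are the initial configuration (state $q_0$, all heads at the left) and the final configuration (state $q_f$, all heads at the left). A string $x=x_0\cdots x_{n-1}\in\Sigma^\star$ is viewed as the structure with domain $\{0,\dots,n-1\}$, a unary predicate for each $\sigma\in\Sigma$ holding at $i$ iff $x_i=\sigma$, constants $\min=0$ and $\max=n-1$,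 and a successor function $S$ with $S(i)=i+1$; $\Sigma$ also denotes this signature. $\Gamma_2$ is the signature with a binary relation symbol $E$ and two constants $s,t$. A successor expansion of a finite structure $A$ is $(A,\min,\max,S)$ with $S$ the successor function of some linear order of the domain having endpoints $\min,\max$; $(\Gamma_2,S)$ is $\Gamma_2$ plus constants $\min,\max$ and the unary function symbol $S$. A $k$-ary interpretation $\pi:L\to K$ consists of a $K$-formula $\partial^\pi(\bar x)$ in a $k$-tuple of variables, for each $n$-ary relation symbol $r$ of $L$ a $K$-formula $r^\pi(\bar x_1,\dots,\bar x_n)$, and for each function or constant symbol of $L$ a definition by cases (cases given by $K$-formulas, values $k$-tuples of $K$-terms). It is quantifier-free if all these formulas are. For a $K$-structure $A$, $A^\pi$ is the $L$-structure with domain $\{\bar a\in A^k: A\models\partial^\pi(\bar a)\}$ and symbols interpreted by their translations. *)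

theory Defs
  imports Main
begin

datatype 'a tsym = LEnd | REnd | Sym 'a

text \<open>The state set Q is the (finite) type 'q. Transitions are tuples
  (state, k-tuple of symbols read, new state, move vector).\<close>
record ('q, 'a) nmfa =
  heads :: nat
  start :: 'q
  final :: 'q
  trans :: "('q \<times> 'a tsym list \<times> 'q \<times> int list) set"

definition final_moves :: "'a tsym list \<Rightarrow> int list" where
  "final_moves a = map (\<lambda>s. if s = LEnd then 0 else -1) a"

definition nmfa_wf :: "('q, 'a) nmfa \<Rightarrow> bool" where
  "nmfa_wf M \<longleftrightarrow>
     (\<forall>(q, a, q', d) \<in> trans M.
        length a = heads M \<and> length d = heads M \<and> set d \<subseteq> {-1, 0, 1} \<and>
        (\<forall>i < heads M. (a ! i = LEnd \<longrightarrow> d ! i \<noteq> -1) \<and> (a ! i = REnd \<longrightarrow> d ! i \<noteq> 1))) \<and>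
     (\<forall>a. length a = heads M \<longrightarrow>
        {(q', d). (final M, a, q', d) \<in> trans M} = {(final M, final_moves a)})"

text \<open>Tape cell j on input x: cell 0 is the left endmarker, cells 1..n hold
  x_0..x_{n-1}, cell n+1 is the right endmarker.\<close>
definition tape_sym :: "'a list \<Rightarrow> nat \<Rightarrow> 'a tsym" where
  "tape_sym x j = (if j = 0 then LEnd else if j \<le> length x then Sym (x ! (j - 1)) else REnd)"

definition configs :: "('q, 'a) nmfa \<Rightarrow> 'a list \<Rightarrow> ('q \<times> nat list) set" where
  "configs M x = {(q, p). length p = heads M \<and> (\<forall>j \<in> set p. j \<le> length x + 1)}"

definition conf_edges :: "('q, 'a) nmfa \<Rightarrow> 'a list \<Rightarrow> (('q \<times> nat list) \<times> ('q \<times> nat list)) set" where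
  "conf_edges M x = {((q, p), (q', p')). (q, p) \<in> configs M x \<and> (q', p') \<in> configs M x \<and>
      (\<exists>d. (q, map (tape_sym x) p, q', d) \<in> trans M \<and> length d = length p \<and>
           map int p' = map2 (\<lambda>j e. int j + e) p d)}"

definition init_conf :: "('q, 'a) nmfa \<Rightarrow> 'q \<times> nat list" where
  "init_conf M = (start M, replicate (heads M) 0)"

definition final_conf :: "('q, 'a) nmfa \<Rightarrow> 'q \<times> nat list" where
  "final_conf M = (final M, replicate (heads M) 0)"

datatype trm = TVar nat | TMin | TMax | TS trm

datatype 'a fm = FPred 'a trm | FEq trm trm | FNeg "'a fm" | FConj "'a fm" "'a fm" | FEx nat "'a fm"

text \<open>Convention: S(max) = max.\<close>
fun eval_trm :: "nat \<Rightarrow> (nat \<Rightarrow> nat) \<Rightarrow> trm \<Rightarrow> nat" where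
  "eval_trm n v (TVar i) = v i"
| "eval_trm n v TMin = 0"
| "eval_trm n v TMax = n - 1"
| "eval_trm n v (TS t) = (let e = eval_trm n v t in if Suc e < n then Suc e else e)"

fun sat :: "'a list \<Rightarrow> (nat \<Rightarrow> nat) \<Rightarrow> 'a fm \<Rightarrow> bool" where
  "sat x v (FPred \<sigma> t) = (x ! eval_trm (length x) v t = \<sigma>)"
| "sat x v (FEq t u) = (eval_trm (length x) v t = eval_trm (length x) v u)"
| "sat x v (FNeg \<phi>) = (\<not> sat x v \<phi>)"
| "sat x v (FConj \<phi> \<psi>) = (sat x v \<phi> \<and> sat x v \<psi>)"
| "sat x v (FEx i \<phi>) = (\<exists>a < length x. sat x (v(i := a)) \<phi>)"

fun fv_trm :: "trm \<Rightarrow> nat set" where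
  "fv_trm (TVar i) = {i}"
| "fv_trm TMin = {}"
| "fv_trm TMax = {}"
| "fv_trm (TS t) = fv_trm t"

fun fv :: "'a fm \<Rightarrow> nat set" where
  "fv (FPred \<sigma> t) = fv_trm t"
| "fv (FEq t u) = fv_trm t \<union> fv_trm u"
| "fv (FNeg \<phi>) = fv \<phi>"
| "fv (FConj \<phi> \<psi>) = fv \<phi> \<union> fv \<psi>"
| "fv (FEx i \<phi>) = fv \<phi> - {i}"

fun qfree :: "'a fm \<Rightarrow> bool" where
  "qfree (FPred \<sigma> t) = True"
| "qfree (FEq t u) = True"
| "qfree (FNeg \<phi>) = qfree \<phi>"
| "qfree (FConj \<phi> \<psi>) = (qfree \<phi> \<and> qfree \<psi>)"
| "qfree (FEx i \<phi>) = False"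

text \<open>A definition by cases: a list of (condition, value tuple) pairs, the first
  case whose condition holds applies; the second component is the "otherwise" value.\<close>
type_synonym 'a cases = "('a fm \<times> trm list) list \<times> trm list"

text \<open>idim = k (arity); the tuple variable x-bar is variables 0..k-1, in the edge
  formula x-bar_1 is 0..k-1 and x-bar_2 is k..2k-1.\<close>
record 'a interp =
  idim :: nat
  idom :: "'a fm"
  iedge :: "'a fm"
  i_s :: "'a cases"
  i_t :: "'a cases"
  i_min :: "'a cases"
  i_max :: "'a cases"
  i_succ :: "'a cases"

definition cases_wf :: "nat \<Rightarrow> nat \<Rightarrow> 'a cases \<Rightarrow> bool" where
  "cases_wf k m c \<longleftrightarrow>
     (\<forall>(\<phi>, ts) \<in> set (fst c). fv \<phi> \<subseteq> {..<m} \<and> length ts = k \<and> (\<forall>t \<in> set ts. fv_trm t \<subseteq> {..<m})) \<and>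
     length (snd c) = k \<and> (\<forall>t \<in> set (snd c). fv_trm t \<subseteq> {..<m})"

definition cases_qf :: "'a cases \<Rightarrow> bool" where
  "cases_qf c \<longleftrightarrow> (\<forall>(\<phi>, ts) \<in> set (fst c). qfree \<phi>)"

definition interp_wf :: "'a interp \<Rightarrow> bool" where
  "interp_wf \<pi> \<longleftrightarrow>
     fv (idom \<pi>) \<subseteq> {..<idim \<pi>} \<and> fv (iedge \<pi>) \<subseteq> {..<2 * idim \<pi>} \<and>
     cases_wf (idim \<pi>) 0 (i_s \<pi>) \<and> cases_wf (idim \<pi>) 0 (i_t \<pi>) \<and>
     cases_wf (idim \<pi>) 0 (i_min \<pi>) \<and> cases_wf (idim \<pi>) 0 (i_max \<pi>) \<and>
     cases_wf (idim \<pi>) (idim \<pi>) (i_succ \<pi>)"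

definition interp_qf :: "'a interp \<Rightarrow> bool" where
  "interp_qf \<pi> \<longleftrightarrow> qfree (idom \<pi>) \<and> qfree (iedge \<pi>) \<and>
     cases_qf (i_s \<pi>) \<and> cases_qf (i_t \<pi>) \<and> cases_qf (i_min \<pi>) \<and> cases_qf (i_max \<pi>) \<and>
     cases_qf (i_succ \<pi>)"

definition asg :: "nat list \<Rightarrow> nat \<Rightarrow> nat" where
  "asg as i = (if i < length as then as ! i else 0)"

definition eval_cases :: "'a list \<Rightarrow> (nat \<Rightarrow> nat) \<Rightarrow> 'a cases \<Rightarrow> nat list" where
  "eval_cases x v c =
     (case find (\<lambda>(\<phi>, ts). sat x v \<phi>) (fst c) of
        Some (\<phi>, ts) \<Rightarrow> map (eval_trm (length x) v) ts
      | None \<Rightarrow> map (eval_trm (length x) v) (snd c))"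

definition idomain :: "'a interp \<Rightarrow> 'a list \<Rightarrow> nat list set" where
  "idomain \<pi> x = {as. length as = idim \<pi> \<and> set as \<subseteq> {..<length x} \<and> sat x (asg as) (idom \<pi>)}"

definition iE :: "'a interp \<Rightarrow> 'a list \<Rightarrow> (nat list \<times> nat list) set" where
  "iE \<pi> x = {(as, bs). as \<in> idomain \<pi> x \<and> bs \<in> idomain \<pi> x \<and> sat x (asg (as @ bs)) (iedge \<pi>)}"

definition iconst :: "'a cases \<Rightarrow> 'a list \<Rightarrow> nat list" where
  "iconst c x = eval_cases x (asg []) c"

definition iS :: "'a interp \<Rightarrow> 'a list \<Rightarrow> nat list \<Rightarrow> nat list" where
  "iS \<pi> x as = eval_cases x (asg as) (i_succ \<pi>)"

definition two_pointed_iso ::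
  "'u set \<Rightarrow> ('u \<times> 'u) set \<Rightarrow> 'u \<Rightarrow> 'u \<Rightarrow> 'w set \<Rightarrow> ('w \<times> 'w) set \<Rightarrow> 'w \<Rightarrow> 'w \<Rightarrow> bool" where
  "two_pointed_iso V E s t V' E' s' t' \<longleftrightarrow> s \<in> V \<and> t \<in> V \<and>
     (\<exists>f. bij_betw f V V' \<and> (\<forall>a \<in> V. \<forall>b \<in> V. (a, b) \<in> E \<longleftrightarrow> (f a, f b) \<in> E') \<and>
          f s = s' \<and> f t = t')"

definition successor_on :: "'u set \<Rightarrow> 'u \<Rightarrow> 'u \<Rightarrow> ('u \<Rightarrow> 'u) \<Rightarrow> bool" where
  "successor_on V mn mx S \<longleftrightarrow>
     (\<exists>L. distinct L \<and> set L = V \<and> L \<noteq> [] \<and> hd L = mn \<and> last L = mx \<and>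
          (\<forall>i. Suc i < length L \<longrightarrow> S (L ! i) = L ! Suc i) \<and> S mx = mx)"

end

theory Submission
  imports Defs
begin

fun cst :: "nat \<Rightarrow> trm" where
  "cst 0 = TMin"
| "cst (Suc i) = TS (cst i)"

definition FT :: "'a fm" where "FT = FEq TMin TMin"
definition FF :: "'a fm" where "FF = FNeg FT"
definition FOr :: "'a fm \<Rightarrow> 'a fm \<Rightarrow> 'a fm" where "FOr a b = FNeg (FConj (FNeg a) (FNeg b))"

fun BigAnd :: "'a fm list \<Rightarrow> 'a fm" where
  "BigAnd [] = FT"
| "BigAnd (f # fs) = FConj f (BigAnd fs)"

fun BigOr :: "'a fm list \<Rightarrow> 'a fm" where
  "BigOr [] = FF"
| "BigOr (f # fs) = FOr f (BigOr fs)"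

lemma sat_FT[simp]: "sat x v FT" by (simp add: FT_def)
lemma sat_FF[simp]: "\<not> sat x v FF" by (simp add: FF_def)
lemma sat_FOr[simp]: "sat x v (FOr a b) = (sat x v a \<or> sat x v b)" by (simp add: FOr_def)
lemma sat_BigAnd[simp]: "sat x v (BigAnd fs) = (\<forall>f\<in>set fs. sat x v f)" by (induction fs) auto
lemma sat_BigOr[simp]: "sat x v (BigOr fs) = (\<exists>f\<in>set fs. sat x v f)" by (induction fs) auto

lemma qfree_simps2[simp]: "qfree (FT::'a fm)" "qfree (FF::'a fm)"
  "qfree (FOr a b) = (qfree a \<and> qfree b)" by (auto simp: FT_def FF_def FOr_def)
lemma qfree_BigAnd[simp]: "qfree (BigAnd fs) = (\<forall>f\<in>set fs. qfree f)" by (induction fs) auto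
lemma qfree_BigOr[simp]: "qfree (BigOr fs) = (\<forall>f\<in>set fs. qfree f)" by (induction fs) auto

lemma fv_simps2[simp]: "fv (FT::'a fm) = {}" "fv (FF::'a fm) = {}"
  "fv (FOr a b) = fv a \<union> fv b" by (auto simp: FT_def FF_def FOr_def)
lemma fv_BigAnd[simp]: "fv (BigAnd fs) = (\<Union>f\<in>set fs. fv f)" by (induction fs) auto
lemma fv_BigOr[simp]: "fv (BigOr fs) = (\<Union>f\<in>set fs. fv f)" by (induction fs) auto

lemma fv_cst[simp]: "fv_trm (cst i) = {}" by (induction i) auto

lemma eval_cst[simp]: "i < n \<Longrightarrow> eval_trm n v (cst i) = i"
  by (induction i) (auto simp: Let_def)

lemma eval_TS: "eval_trm n v (TS t) = (if Suc (eval_trm n v t) < n then Suc (eval_trm n v t) else eval_trm n v t)"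
  by (simp add: Let_def)

lemma asg_nth[simp]: "i < length as \<Longrightarrow> asg as i = as ! i" by (simp add: asg_def)

lemma find_SomeD: "find P xs = Some y \<Longrightarrow> P y \<and> y \<in> set xs"
  by (induction xs) (auto split: if_splits)

lemma eval_cases_unique:
  assumes "(c, ts) \<in> set cs" "sat x v c"
    and "\<And>c' ts'. (c', ts') \<in> set cs \<Longrightarrow> sat x v c' \<Longrightarrow> map (eval_trm (length x) v) ts' = R"
  shows "eval_cases x v (cs, oth) = R"
proof -
  have "find (\<lambda>(\<phi>, ts). sat x v \<phi>) cs \<noteq> None"
    using assms(1,2) by (auto simp: find_None_iff)
  then obtain c' ts' where f: "find (\<lambda>(\<phi>, ts). sat x v \<phi>) cs = Some (c', ts')" by auto
  from find_SomeD[OF f] have "sat x v c'" "(c', ts') \<in> set cs" by auto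
  with f assms(3) show ?thesis by (simp add: eval_cases_def)
qed

lemma eval_cases_none:
  assumes "\<And>c' ts'. (c', ts') \<in> set cs \<Longrightarrow> \<not> sat x v c'"
  shows "eval_cases x v (cs, oth) = map (eval_trm (length x) v) oth"
proof -
  have "find (\<lambda>(\<phi>, ts). sat x v \<phi>) cs = None"
    using assms by (auto simp: find_None_iff)
  then show ?thesis by (simp add: eval_cases_def)
qed

fun val :: "nat list \<Rightarrow> nat list \<Rightarrow> nat" where
  "val (m # ms) (r # rs) = r + m * val ms rs"
| "val _ _ = 0"

fun dig :: "nat list \<Rightarrow> nat \<Rightarrow> nat list" where
  "dig [] i = []"
| "dig (m # ms) i = (i mod m) # dig ms (i div m)"

fun inc :: "nat list \<Rightarrow> nat list \<Rightarrow> nat list" where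
  "inc (m # ms) (r # rs) = (if Suc r < m then Suc r # rs else 0 # inc ms rs)"
| "inc _ _ = []"

lemma dig_valid: "i < prod_list ms \<Longrightarrow> list_all2 (<) (dig ms i) ms"
proof (induction ms arbitrary: i)
  case Nil then show ?case by simp
next
  case (Cons m ms)
  then have m: "m > 0" by (cases m) auto
  have "i div m < prod_list ms" using Cons.prems m
    by (simp add: div_less_iff_less_mult mult.commute)
  then show ?case using Cons m by simp
qed

lemma val_dig: "i < prod_list ms \<Longrightarrow> val ms (dig ms i) = i"
proof (induction ms arbitrary: i)
  case Nil then show ?case by simp
next
  case (Cons m ms)
  then have m: "m > 0" by (cases m) auto
  have "i div m < prod_list ms" using Cons.prems m
    by (simp add: div_less_iff_less_mult mult.commute)
  then show ?case using Cons m by simp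
qed

lemma val_bound: "list_all2 (<) ds ms \<Longrightarrow> val ms ds < prod_list ms"
proof (induction ds ms rule: list_all2_induct)
  case Nil then show ?case by simp
next
  case (Cons r rs m ms)
  have "r + m * val ms rs < m + m * val ms rs" using Cons by simp
  also have "\<dots> = m * (Suc (val ms rs))" by simp
  also have "\<dots> \<le> m * prod_list ms" using Cons by (intro mult_le_mono2) simp
  finally show ?case by simp
qed

lemma dig_val: "list_all2 (<) ds ms \<Longrightarrow> dig ms (val ms ds) = ds"
proof (induction ds ms rule: list_all2_induct)
  case Nil then show ?case by simp
next
  case (Cons r rs m ms)
  then show ?case by simp
qed

lemma val_inc: "list_all2 (<) ds ms \<Longrightarrow> Suc (val ms ds) < prod_list ms \<Longrightarrow>
   list_all2 (<) (inc ms ds) ms \<and> val ms (inc ms ds) = Suc (val ms ds)"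
proof (induction ds ms rule: list_all2_induct)
  case Nil then show ?case by simp
next
  case (Cons r rs m ms)
  show ?case
  proof (cases "Suc r < m")
    case True then show ?thesis using Cons by simp
  next
    case False
    then have r: "Suc r = m" using Cons by simp
    have "m * Suc (val ms rs) < m * prod_list ms" using Cons.prems r by simp
    then have "Suc (val ms rs) < prod_list ms" by (metis mult_less_cancel1)
    then show ?thesis using Cons r by simp
  qed
qed

lemma dig_Suc: "Suc i < prod_list ms \<Longrightarrow> dig ms (Suc i) = inc ms (dig ms i)"
proof -
  assume a: "Suc i < prod_list ms"
  have v: "list_all2 (<) (dig ms i) ms" by (rule dig_valid) (use a in simp)
  have vd: "val ms (dig ms i) = i" by (rule val_dig) (use a in simp)
  from val_inc[OF v] a vd have "list_all2 (<) (inc ms (dig ms i)) ms" "val ms (inc ms (dig ms i)) = Suc i"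
    by auto
  from dig_val[OF this(1)] this(2) show ?thesis by simp
qed

lemma inc_at: "j < length ds \<Longrightarrow> length ms = length ds \<Longrightarrow> (\<forall>i<j. Suc (ds ! i) = ms ! i) \<Longrightarrow> Suc (ds ! j) < ms ! j \<Longrightarrow>
   inc ms ds = replicate j 0 @ Suc (ds ! j) # drop (Suc j) ds"
proof (induction j arbitrary: ms ds)
  case 0 then show ?case by (cases ms; cases ds) auto
next
  case (Suc j)
  then show ?case by (cases ms; cases ds) force+
qed

lemma val_max: "list_all2 (\<lambda>d m. Suc d = m) ds ms \<Longrightarrow> Suc (val ms ds) = prod_list ms"
proof (induction ds ms rule: list_all2_induct)
  case Nil then show ?case by simp
next
  case (Cons r rs m ms)
  then have "m = Suc r" by simp
  then show ?case using Cons by (simp add: algebra_simps flip: Cons(3))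
qed

lemma dig_zero: "dig ms 0 = replicate (length ms) 0"
  by (induction ms) auto


definition code :: "'q list \<Rightarrow> 'q \<Rightarrow> nat" where
  "code qs q = the_inv_into {..<length qs} (nth qs) q"

definition eA :: "nat \<Rightarrow> nat \<Rightarrow> nat" where
  "eA n h = (if h = 0 then 1 else if h \<le> n then 0 else 2)"
definition eB :: "nat \<Rightarrow> nat \<Rightarrow> nat" where
  "eB n h = (if h = 0 then 0 else if h \<le> n then h - 1 else 0)"
definition dec :: "nat \<Rightarrow> nat \<Rightarrow> nat \<Rightarrow> nat" where
  "dec n a b = (if a = 1 then 0 else if a = 0 then Suc b else Suc n)"

definition enc :: "'q list \<Rightarrow> nat \<Rightarrow> 'q \<times> nat list \<Rightarrow> nat list" where
  "enc qs n c = map (eA n) (snd c) @ map (eB n) (snd c) @ [code qs (fst c)]"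

definition cfgs :: "nat \<Rightarrow> nat \<Rightarrow> ('q \<times> nat list) set" where
  "cfgs k n = {(q, p). length p = k \<and> (\<forall>j \<in> set p. j \<le> n + 1)}"

definition blkdom :: "nat \<Rightarrow> nat \<Rightarrow> 'a fm" where
  "blkdom k i = BigOr [FConj (FEq (TVar i) (cst 1)) (FEq (TVar (k + i)) TMin),
                       FEq (TVar i) TMin,
                       FConj (FEq (TVar i) (cst 2)) (FEq (TVar (k + i)) TMin)]"

definition domf :: "nat \<Rightarrow> nat \<Rightarrow> 'a fm" where
  "domf Qn k = FConj (BigAnd (map (blkdom k) [0..<k])) (BigOr (map (\<lambda>j. FEq (TVar (2 * k)) (cst j)) [0..<Qn]))"

lemma length_enc[simp]: "length (enc qs n (q, p)) = 2 * length p + 1"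
  by (simp add: enc_def)

lemma enc_nth:
  assumes "i < length p"
  shows "enc qs n (q, p) ! i = eA n (p ! i)" "enc qs n (q, p) ! (length p + i) = eB n (p ! i)"
  using assms by (simp_all add: enc_def nth_append)

lemma enc_nth_last: "enc qs n (q, p) ! (2 * length p) = code qs q"
  by (simp add: enc_def nth_append)

lemma eAB_dec: "h \<le> Suc n \<Longrightarrow> dec n (eA n h) (eB n h) = h"
  by (auto simp: eA_def eB_def dec_def)

lemma eA_lt: "eA n h \<le> 2" by (simp add: eA_def)
lemma eB_lt: "0 < n \<Longrightarrow> eB n h < n" by (auto simp: eB_def)

locale E =
  fixes qs :: "'q list" and k :: nat and x :: "'a list"
  assumes dq: "distinct qs" and sq: "set qs = UNIV" and nb: "length qs + 3 \<le> length x"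
begin

abbreviation "n \<equiv> length x"
abbreviation "Qn \<equiv> length qs"

lemma bij_qs: "bij_betw (nth qs) {..<Qn} UNIV"
  unfolding bij_betw_def
proof
  show "inj_on (nth qs) {..<Qn}" using dq by (simp add: inj_on_nth)
  show "nth qs ` {..<Qn} = UNIV" using sq by (metis atLeast_upt image_set map_nth)
qed

lemma code_lt[simp]: "code qs q < Qn"
proof -
  have "the_inv_into {..<Qn} (nth qs) q \<in> {..<Qn}"
    using bij_qs unfolding bij_betw_def by (intro the_inv_into_into) auto
  then show ?thesis by (simp add: code_def)
qed

lemma code_lt_n[simp]: "code qs q < n"
  using code_lt[of q] nb by linarith

lemma n_ge: "3 \<le> n" "Qn < n" "0 < n" "1 < n" "2 < n" using nb by auto

lemma nth_code[simp]: "qs ! code qs q = q"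
  using bij_qs unfolding code_def by (metis UNIV_I bij_betw_def f_the_inv_into_f)

lemma code_nth[simp]: "i < Qn \<Longrightarrow> code qs (qs ! i) = i"
  using bij_qs unfolding code_def by (simp add: bij_betw_def the_inv_into_f_f)

lemma code_inj: "code qs q = code qs q' \<Longrightarrow> q = q'"
  by (metis nth_code)

lemma enc_inj: "c \<in> cfgs k n \<Longrightarrow> c' \<in> cfgs k n \<Longrightarrow> enc qs n c = enc qs n c' \<Longrightarrow> c = c'"
proof -
  assume c: "c \<in> cfgs k n" and c': "c' \<in> cfgs k n" and e: "enc qs n c = enc qs n c'"
  obtain q p q' p' where cc: "c = (q, p)" "c' = (q', p')" by (cases c, cases c')
  have lp: "length p = k" "length p' = k" using c c' cc by (auto simp: cfgs_def)
  have "p ! i = p' ! i" if "i < k" for i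
  proof -
    have "p ! i \<le> Suc n" "p' ! i \<le> Suc n" using c c' cc lp that by (auto simp: cfgs_def)
    moreover have "eA n (p ! i) = eA n (p' ! i)" "eB n (p ! i) = eB n (p' ! i)"
      using enc_nth[of i p qs n q] enc_nth[of i p' qs n q'] e cc lp that by auto
    ultimately show ?thesis by (metis eAB_dec)
  qed
  then have "p = p'" using lp by (simp add: nth_equalityI)
  moreover have "q = q'" using enc_nth_last[of qs n q p] enc_nth_last[of qs n q' p'] e cc lp
    by (auto intro: code_inj)
  ultimately show ?thesis using cc by simp
qed

lemma enc_dom:
  assumes "c \<in> cfgs k n"
  shows "length (enc qs n c) = 2 * k + 1 \<and> set (enc qs n c) \<subseteq> {..<n} \<and> sat x (asg (enc qs n c)) (domf Qn k)"
proof -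
  obtain q p where cc: "c = (q, p)" by (cases c)
  have lp: "length p = k" using assms cc by (auto simp: cfgs_def)
  have n3: "3 \<le> n" "Qn < n" using nb by auto
  have s: "set (enc qs n c) \<subseteq> {..<n}"
  proof -
    have "\<forall>h. eA n h < n" using n3 eA_lt[of n] by (auto simp: eA_def)
    moreover have "\<forall>h. eB n h < n" using n3 by (auto simp: eB_def)
    moreover have "code qs q < n" using n3 code_lt[of q] by linarith
    ultimately show ?thesis using n3 cc by (auto simp: enc_def)
  qed
  have "sat x (asg (enc qs n c)) (blkdom k i)" if "i < k" for i
  proof -
    have h: "p ! i \<le> Suc n" using assms cc lp that by (auto simp: cfgs_def)
    have i1: "i < length (enc qs n c)" "k + i < length (enc qs n c)" using that lp cc by auto
    have e: "asg (enc qs n c) i = eA n (p ! i)" "asg (enc qs n c) (k + i) = eB n (p ! i)"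
      using enc_nth[of i p qs n q] i1 lp that cc by auto
    have "p ! i = 0 \<or> (0 < p ! i \<and> p ! i \<le> n) \<or> p ! i = Suc n" using h by linarith
    then show ?thesis
    proof (elim disjE)
      assume "p ! i = 0" then show ?thesis using n3 e by (simp add: blkdom_def eA_def eB_def)
    next
      assume "0 < p ! i \<and> p ! i \<le> n" then show ?thesis using n3 e by (simp add: blkdom_def eA_def)
    next
      assume "p ! i = Suc n" then show ?thesis using n3 e by (simp add: blkdom_def eA_def eB_def)
    qed
  qed
  moreover have "sat x (asg (enc qs n c)) (BigOr (map (\<lambda>j. FEq (TVar (2 * k)) (cst j)) [0..<Qn]))"
  proof -
    have "asg (enc qs n c) (2 * k) = code qs q" using enc_nth_last[of qs n q p] cc lp by simp
    then have "sat x (asg (enc qs n c)) (FEq (TVar (2 * k)) (cst (code qs q)))" using n3 code_lt[of q] by simp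
    moreover have "FEq (TVar (2 * k)) (cst (code qs q)) \<in> set (map (\<lambda>j. FEq (TVar (2 * k)) (cst j)) [0..<Qn])"
      using code_lt[of q] by simp
    ultimately show ?thesis unfolding sat_BigOr by blast
  qed
  ultimately show ?thesis using s lp cc by (auto simp: domf_def)
qed


lemma blk_cases:
  assumes "length as = 2 * k + 1" "set as \<subseteq> {..<n}" "sat x (asg as) (domf Qn k)" "i < k"
  shows "(as ! i = 1 \<and> as ! (k + i) = 0) \<or> as ! i = 0 \<or> (as ! i = 2 \<and> as ! (k + i) = 0)"
proof -
  have "sat x (asg as) (blkdom k i)" using assms by (auto simp: domf_def)
  moreover have "asg as i = as ! i" "asg as (k + i) = as ! (k + i)" using assms by auto
  ultimately show ?thesis using n_ge by (simp add: blkdom_def)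
qed

lemma st_cases:
  assumes "length as = 2 * k + 1" "set as \<subseteq> {..<n}" "sat x (asg as) (domf Qn k)"
  shows "as ! (2 * k) < Qn"
proof -
  have "sat x (asg as) (BigOr (map (\<lambda>j. FEq (TVar (2 * k)) (cst j)) [0..<Qn]))" using assms by (auto simp: domf_def)
  then obtain j where j: "j < Qn" "sat x (asg as) (FEq (TVar (2 * k)) (cst j))" by auto
  moreover have "asg as (2 * k) = as ! (2 * k)" using assms by auto
  ultimately show ?thesis using n_ge by simp
qed

lemma enc_surj:
  assumes "length as = 2 * k + 1" "set as \<subseteq> {..<n}" "sat x (asg as) (domf Qn k)"
  shows "\<exists>c \<in> cfgs k n. as = enc qs n c"
proof -
  define p where "p = map (\<lambda>i. dec n (as ! i) (as ! (k + i))) [0..<k]"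
  define q where "q = qs ! (as ! (2 * k))"
  have lt: "as ! j < n" if "j < 2 * k + 1" for j using assms that by (auto simp: set_conv_nth)
  have pc: "(q, p) \<in> cfgs k n"
  proof -
    have "p ! i \<le> Suc n" if "i < k" for i using lt[of "k + i"] that by (auto simp: p_def dec_def)
    then show ?thesis by (auto simp: cfgs_def p_def in_set_conv_nth)
  qed
  have ea: "eA n (p ! i) = as ! i" "eB n (p ! i) = as ! (k + i)" if "i < k" for i
  proof -
    have "as ! (k + i) < n" using lt[of "k + i"] that by simp
    then show "eA n (p ! i) = as ! i" "eB n (p ! i) = as ! (k + i)"
      using blk_cases[OF assms that] that by (auto simp: p_def dec_def eA_def eB_def)
  qed
  have "enc qs n (q, p) = as"
  proof (rule nth_equalityI)
    show "length (enc qs n (q, p)) = length as" using assms by (simp add: p_def)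
    fix j assume "j < length (enc qs n (q, p))"
    then have j: "j < 2 * k + 1" by (simp add: p_def)
    have lp: "length p = k" by (simp add: p_def)
    consider "j < k" | "k \<le> j" "j < 2 * k" | "j = 2 * k" using j by linarith
    then show "enc qs n (q, p) ! j = as ! j"
    proof cases
      case 1 then show ?thesis using enc_nth(1)[of j p qs n q] ea lp by simp
    next
      case 2
      then obtain i where "j = k + i" "i < k" by (metis add_less_imp_less_left le_add_diff_inverse mult_2)
      then show ?thesis using enc_nth(2)[of i p qs n q] ea lp by simp
    next
      case 3 then show ?thesis using enc_nth_last[of qs n q p] st_cases[OF assms] lp by (simp add: q_def)
    qed
  qed
  then show ?thesis using pc by blast
qed

lemma enc_image:
  "{as. length as = 2 * k + 1 \<and> set as \<subseteq> {..<n} \<and> sat x (asg as) (domf Qn k)} = enc qs n ` cfgs k n"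
  using enc_surj enc_dom by blast

lemma bij_enc: "bij_betw (enc qs n) (cfgs k n) {as. length as = 2 * k + 1 \<and> set as \<subseteq> {..<n} \<and> sat x (asg as) (domf Qn k)}"
  unfolding enc_image by (rule inj_on_imp_bij_betw) (auto intro: inj_onI enc_inj)

end

fun rd :: "nat \<Rightarrow> 'a tsym \<Rightarrow> nat \<Rightarrow> 'a fm" where
  "rd k LEnd i = FEq (TVar i) (cst 1)"
| "rd k REnd i = FEq (TVar i) (cst 2)"
| "rd k (Sym \<sigma>) i = FConj (FEq (TVar i) TMin) (FPred \<sigma> (TVar (k + i)))"

definition mv :: "nat \<Rightarrow> int \<Rightarrow> nat \<Rightarrow> 'a fm" where
  "mv k d i = (let A = TVar i; B = TVar (k + i); A' = TVar (2 * k + 1 + i); B' = TVar (2 * k + 1 + k + i) in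
     if d = 0 then FConj (FEq A A') (FEq B B')
     else if d = 1 then BigOr [BigAnd [FEq A (cst 1), FEq A' TMin, FEq B' TMin],
                               BigAnd [FEq A TMin, FNeg (FEq B TMax), FEq A' TMin, FEq B' (TS B)],
                               BigAnd [FEq A TMin, FEq B TMax, FEq A' (cst 2)]]
     else if d = -1 then BigOr [BigAnd [FEq A TMin, FEq B TMin, FEq A' (cst 1)],
                               BigAnd [FEq A TMin, FNeg (FEq B TMin), FEq A' TMin, FEq (TS B') B, FNeg (FEq B' B)],
                               BigAnd [FEq A (cst 2), FEq A' TMin, FEq B' TMax]]
     else FF)"

definition trf :: "'q list \<Rightarrow> nat \<Rightarrow> 'q \<times> 'a tsym list \<times> 'q \<times> int list \<Rightarrow> 'a fm" where
  "trf qs k \<tau> = (case \<tau> of (q, a, q', d) \<Rightarrow>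
     BigAnd ([FEq (TVar (2 * k)) (cst (code qs q)), FEq (TVar (2 * k + 1 + 2 * k)) (cst (code qs q'))] @
             map (\<lambda>i. FConj (rd k (a ! i) i) (mv k (d ! i) i)) [0..<k]))"

definition edgef :: "'q list \<Rightarrow> nat \<Rightarrow> ('q \<times> 'a tsym list \<times> 'q \<times> int list) list \<Rightarrow> 'a fm" where
  "edgef qs k tlist = BigOr (map (trf qs k) tlist)"

lemma configs_cfgs: "configs M x = cfgs (heads M) (length x)"
  by (simp add: configs_def cfgs_def)

context E begin

lemma rd_sem:
  assumes "v i = eA n h" "v (k + i) = eB n h" "h \<le> Suc n"
  shows "sat x v (rd k s i) \<longleftrightarrow> tape_sym x h = s"
proof -
  have "h = 0 \<or> (0 < h \<and> h \<le> n) \<or> h = Suc n" using assms by linarith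
  then show ?thesis
  proof (elim disjE)
    assume "h = 0" then show ?thesis using assms n_ge by (cases s) (auto simp: eA_def eB_def tape_sym_def)
  next
    assume "0 < h \<and> h \<le> n" then show ?thesis using assms n_ge by (cases s) (auto simp: eA_def eB_def tape_sym_def)
  next
    assume "h = Suc n" then show ?thesis using assms n_ge by (cases s) (auto simp: eA_def eB_def tape_sym_def)
  qed
qed

lemma mv_sem:
  assumes "v i = eA n h" "v (k + i) = eB n h" "v (2 * k + 1 + i) = eA n h'" "v (2 * k + 1 + k + i) = eB n h'"
    "h \<le> Suc n" "h' \<le> Suc n" "d \<in> {-1, 0, 1}"
  shows "sat x v (mv k d i) \<longleftrightarrow> int h' = int h + d"
proof -
  have hc: "h = 0 \<or> (0 < h \<and> h < n) \<or> h = n \<or> h = Suc n" using assms by linarith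
  have hc': "h' = 0 \<or> (0 < h' \<and> h' < n) \<or> h' = n \<or> h' = Suc n" using assms by linarith
  have n: "3 \<le> n" using n_ge by simp
  from assms(7) consider "d = 0" | "d = 1" | "d = -1" by auto
  then show ?thesis
  proof cases
    case 1 then show ?thesis using assms hc hc' n by (auto simp: mv_def Let_def eA_def eB_def)
  next
    case 2 then show ?thesis using assms hc hc' n by (auto simp: mv_def Let_def eA_def eB_def)
  next
    case 3 then show ?thesis using assms hc hc' n by (auto simp: mv_def Let_def eA_def eB_def)
  qed
qed


lemma asg_pair:
  assumes "length p = k" "length p' = k" "i < k"
  shows "asg (enc qs n (q, p) @ enc qs n (q', p')) i = eA n (p ! i)"
    "asg (enc qs n (q, p) @ enc qs n (q', p')) (k + i) = eB n (p ! i)"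
    "asg (enc qs n (q, p) @ enc qs n (q', p')) (2 * k + 1 + i) = eA n (p' ! i)"
    "asg (enc qs n (q, p) @ enc qs n (q', p')) (2 * k + 1 + k + i) = eB n (p' ! i)"
  using assms enc_nth[of i p qs n q] enc_nth[of i p' qs n q']
  by (simp_all add: nth_append)

lemma asg_pair2:
  assumes "length p = k" "length p' = k"
  shows "asg (enc qs n (q, p) @ enc qs n (q', p')) (2 * k) = code qs q"
    "asg (enc qs n (q, p) @ enc qs n (q', p')) (2 * k + 1 + 2 * k) = code qs q'"
  using assms enc_nth_last[of qs n q p] enc_nth_last[of qs n q' p']
  by (simp_all add: nth_append)

lemma trf_sem:
  assumes c: "(q, p) \<in> cfgs k n" "(q', p') \<in> cfgs k n"
    and la: "length a = k" "length d = k" "set d \<subseteq> {-1, 0, 1}"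
  shows "sat x (asg (enc qs n (q, p) @ enc qs n (q', p'))) (trf qs k (q0, a, q0', d)) \<longleftrightarrow>
     q0 = q \<and> q0' = q' \<and> a = map (tape_sym x) p \<and> map int p' = map2 (\<lambda>j e. int j + e) p d"
proof -
  let ?v = "asg (enc qs n (q, p) @ enc qs n (q', p'))"
  have lp: "length p = k" "length p' = k" using c by (auto simp: cfgs_def)
  have hp: "p ! i \<le> Suc n" "p' ! i \<le> Suc n" if "i < k" for i
    using c lp that by (auto simp: cfgs_def)
  have di: "d ! i \<in> {-1, 0, 1}" if "i < k" for i using la that by (auto simp: set_conv_nth)
  have each: "sat x ?v (FConj (rd k (a ! i) i) (mv k (d ! i) i)) \<longleftrightarrow>
      tape_sym x (p ! i) = a ! i \<and> int (p' ! i) = int (p ! i) + d ! i" if "i < k" for i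
    using rd_sem[OF asg_pair(1,2)[OF lp that] hp(1)[OF that]]
      mv_sem[OF asg_pair[OF lp that] hp[OF that] di[OF that]] by simp
  have st: "sat x ?v (FEq (TVar (2 * k)) (cst (code qs q0))) \<longleftrightarrow> q0 = q"
    "sat x ?v (FEq (TVar (2 * k + 1 + 2 * k)) (cst (code qs q0'))) \<longleftrightarrow> q0' = q'"
    using asg_pair2[OF lp] by (auto dest: code_inj)
  have m1: "a = map (tape_sym x) p \<longleftrightarrow> (\<forall>i<k. tape_sym x (p ! i) = a ! i)"
    using la lp by (auto simp: list_eq_iff_nth_eq)
  have m2: "map int p' = map2 (\<lambda>j e. int j + e) p d \<longleftrightarrow> (\<forall>i<k. int (p' ! i) = int (p ! i) + d ! i)"
    using la lp by (auto simp: list_eq_iff_nth_eq)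
  show ?thesis unfolding trf_def using st each m1 m2 by auto
qed

lemma edge_sem:
  assumes wf: "nmfa_wf M" and hk: "heads M = k" and tlist: "set tlist = trans M"
    and c: "(q, p) \<in> cfgs k n" "(q', p') \<in> cfgs k n"
  shows "sat x (asg (enc qs n (q, p) @ enc qs n (q', p'))) (edgef qs k tlist) \<longleftrightarrow>
     ((q, p), (q', p')) \<in> conf_edges M x"
proof -
  have lp: "length p = k" "length p' = k" using c by (auto simp: cfgs_def)
  have wt: "length a = k \<and> length d = k \<and> set d \<subseteq> {-1, 0, 1}" if "(q0, a, q0', d) \<in> trans M" for q0 a q0' d
    using wf that hk unfolding nmfa_wf_def by fastforce
  show ?thesis
  proof
    assume "sat x (asg (enc qs n (q, p) @ enc qs n (q', p'))) (edgef qs k tlist)"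
    then obtain \<tau> where t: "\<tau> \<in> trans M" "sat x (asg (enc qs n (q, p) @ enc qs n (q', p'))) (trf qs k \<tau>)"
      using tlist by (auto simp: edgef_def)
    obtain q0 a q0' d where tt: "\<tau> = (q0, a, q0', d)" by (cases \<tau>) auto
    have w: "length a = k" "length d = k" "set d \<subseteq> {-1, 0, 1}" using wt t tt by auto
    from t tt trf_sem[OF c w] have "q0 = q \<and> q0' = q' \<and> a = map (tape_sym x) p \<and> map int p' = map2 (\<lambda>j e. int j + e) p d"
      by simp
    then show "((q, p), (q', p')) \<in> conf_edges M x" using t tt w c lp hk
      by (auto simp: conf_edges_def configs_cfgs)
  next
    assume "((q, p), (q', p')) \<in> conf_edges M x"
    then obtain d where d: "(q, map (tape_sym x) p, q', d) \<in> trans M" "map int p' = map2 (\<lambda>j e. int j + e) p d"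
      by (auto simp: conf_edges_def)
    have w: "length (map (tape_sym x) p) = k" "length d = k" "set d \<subseteq> {-1, 0, 1}" using wt[OF d(1)] by auto
    have "sat x (asg (enc qs n (q, p) @ enc qs n (q', p'))) (trf qs k (q, map (tape_sym x) p, q', d))"
      using trf_sem[OF c w] d by simp
    then show "sat x (asg (enc qs n (q, p) @ enc qs n (q', p'))) (edgef qs k tlist)"
      using d(1) tlist by (auto simp: edgef_def)
  qed
qed

end

definition pre :: "nat \<Rightarrow> 'a fm" where
  "pre j = BigAnd (map (\<lambda>i. FEq (TVar i) (cst 2)) [0..<j])"

definition tms :: "nat \<Rightarrow> nat \<Rightarrow> trm \<Rightarrow> trm \<Rightarrow> trm list" where
  "tms k j NA NB = map (\<lambda>i. if i < j then cst 1 else if i = j then NA else TVar i) [0..<k] @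
     map (\<lambda>i. if i < j then TMin else if i = j then NB else TVar (k + i)) [0..<k] @ [TVar (2 * k)]"

definition bcases :: "nat \<Rightarrow> nat \<Rightarrow> ('a fm \<times> trm list) list" where
  "bcases k j = [(FConj (pre j) (FEq (TVar j) (cst 1)), tms k j TMin TMin),
     (FConj (pre j) (FConj (FEq (TVar j) TMin) (FNeg (FEq (TVar (k + j)) TMax))), tms k j TMin (TS (TVar (k + j)))),
     (FConj (pre j) (FConj (FEq (TVar j) TMin) (FEq (TVar (k + j)) TMax)), tms k j (cst 2) TMin)]"

definition scase :: "nat \<Rightarrow> nat \<Rightarrow> 'a fm \<times> trm list" where
  "scase Qn k = (FConj (pre k) (FNeg (FEq (TVar (2 * k)) (cst (Qn - 1)))),
     replicate k (cst 1) @ replicate k TMin @ [TS (TVar (2 * k))])"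

definition succ_cases :: "nat \<Rightarrow> nat \<Rightarrow> 'a cases" where
  "succ_cases Qn k = (concat (map (bcases k) [0..<k]) @ [scase Qn k], map TVar [0..<2 * k + 1])"

definition pnew :: "nat \<Rightarrow> nat list \<Rightarrow> nat list" where
  "pnew j p = replicate j 0 @ Suc (p ! j) # drop (Suc j) p"

lemma length_pnew[simp]: "j < length p \<Longrightarrow> length (pnew j p) = length p"
  by (simp add: pnew_def)

lemma nth_pnew: "j < length p \<Longrightarrow> i < length p \<Longrightarrow>
   pnew j p ! i = (if i < j then 0 else if i = j then Suc (p ! j) else p ! i)"
  apply (auto simp: pnew_def nth_append nth_Cons split: nat.splits)
  apply (subgoal_tac "Suc (j + x2) = i")
   apply auto
  done

lemma eval_cases_none':
  assumes "\<And>c' ts'. (c', ts') \<in> set (fst cs) \<Longrightarrow> \<not> sat x v c'"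
  shows "eval_cases x v cs = map (eval_trm (length x) v) (snd cs)"
  using eval_cases_none[of "fst cs" x v "snd cs"] assms by simp

lemma eval_cases_unique':
  assumes "(c, ts) \<in> set (fst cs)" "sat x v c"
    and "\<And>c' ts'. (c', ts') \<in> set (fst cs) \<Longrightarrow> sat x v c' \<Longrightarrow> map (eval_trm (length x) v) ts' = R"
  shows "eval_cases x v cs = R"
  using eval_cases_unique[of c ts "fst cs" x v R "snd cs"] assms by simp

context E begin

lemma v_enc:
  assumes "length p = k" "i < k"
  shows "asg (enc qs n (q, p)) i = eA n (p ! i)" "asg (enc qs n (q, p)) (k + i) = eB n (p ! i)"
  using assms enc_nth[of i p qs n q] by auto

lemma v_enc_last:
  assumes "length p = k"
  shows "asg (enc qs n (q, p)) (2 * k) = code qs q"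
  using assms enc_nth_last[of qs n q p] by auto

lemma tms_eval:
  assumes lp: "length p = k" and j: "j < k"
    and a: "eval_trm n (asg (enc qs n (q, p))) NA = eA n (Suc (p ! j))"
    and b: "eval_trm n (asg (enc qs n (q, p))) NB = eB n (Suc (p ! j))"
  shows "map (eval_trm n (asg (enc qs n (q, p)))) (tms k j NA NB) = enc qs n (q, pnew j p)"
proof (rule nth_equalityI)
  show "length (map (eval_trm n (asg (enc qs n (q, p)))) (tms k j NA NB)) = length (enc qs n (q, pnew j p))"
    using lp j by (simp add: tms_def)
  fix i assume "i < length (map (eval_trm n (asg (enc qs n (q, p)))) (tms k j NA NB))"
  then have i: "i < 2 * k + 1" by (simp add: tms_def)
  have lpn: "length (pnew j p) = k" using lp j by simp
  consider "i < k" | "k \<le> i" "i < 2 * k" | "i = 2 * k" using i by linarith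
  then show "map (eval_trm n (asg (enc qs n (q, p)))) (tms k j NA NB) ! i = enc qs n (q, pnew j p) ! i"
  proof cases
    case 1
    then show ?thesis using enc_nth(1)[of i "pnew j p" qs n q] lpn nth_pnew[of j p i] lp j a v_enc[OF lp 1] n_ge
      by (auto simp: tms_def nth_append eA_def)
  next
    case 2
    then obtain i' where i': "i = k + i'" "i' < k" by (metis add_less_imp_less_left le_add_diff_inverse mult_2)
    then show ?thesis using enc_nth(2)[of i' "pnew j p" qs n q] lpn nth_pnew[of j p i'] lp j b v_enc[OF lp i'(2)] n_ge
      by (auto simp: tms_def nth_append eB_def)
  next
    case 3
    then show ?thesis using enc_nth_last[of qs n q "pnew j p"] lpn lp v_enc_last[OF lp]
      by (simp add: tms_def nth_append)
  qed
qed


lemma pre_sat: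
  assumes c: "(q, p) \<in> cfgs k n" and j: "j' \<le> k"
  shows "sat x (asg (enc qs n (q, p))) (pre j') \<longleftrightarrow> (\<forall>i<j'. p ! i = Suc n)"
proof -
  have lp: "length p = k" using c by (simp add: cfgs_def)
  have "sat x (asg (enc qs n (q, p))) (FEq (TVar i) (cst 2)) \<longleftrightarrow> p ! i = Suc n" if "i < k" for i
  proof -
    have "p ! i \<le> Suc n" using c lp that by (auto simp: cfgs_def)
    then show ?thesis using v_enc[OF lp that] n_ge by (auto simp: eA_def)
  qed
  then show ?thesis using j by (auto simp: pre_def)
qed

lemma S1:
  assumes c: "(q, p) \<in> cfgs k n" and j: "j < k" and pj: "\<forall>i<j. p ! i = Suc n" "p ! j \<le> n"
  shows "eval_cases x (asg (enc qs n (q, p))) (succ_cases Qn k) = enc qs n (q, pnew j p)"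
proof -
  let ?v = "asg (enc qs n (q, p))"
  have lp: "length p = k" using c by (simp add: cfgs_def)
  have hp: "p ! i \<le> Suc n" if "i < k" for i using c lp that by (auto simp: cfgs_def)
  have vj: "?v j = eA n (p ! j)" "?v (k + j) = eB n (p ! j)" using v_enc[OF lp j] by auto
  have prej: "sat x ?v (pre j)" using pre_sat[OF c] j pj by simp
  have ok: "map (eval_trm n ?v) ts' = enc qs n (q, pnew j p)"
    if "(c', ts') \<in> set (bcases k j)" "sat x ?v c'" for c' ts'
  proof -
    have n1: "1 < n" "2 < n" "0 < n" "Suc 0 \<le> n" using n_ge by auto
    from that(1) consider
      "c' = FConj (pre j) (FEq (TVar j) (cst 1))" "ts' = tms k j TMin TMin"
    | "c' = FConj (pre j) (FConj (FEq (TVar j) TMin) (FNeg (FEq (TVar (k + j)) TMax)))" "ts' = tms k j TMin (TS (TVar (k + j)))"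
    | "c' = FConj (pre j) (FConj (FEq (TVar j) TMin) (FEq (TVar (k + j)) TMax))" "ts' = tms k j (cst 2) TMin"
      by (auto simp: bcases_def)
    then show ?thesis
    proof cases
      case 1
      then have "eA n (p ! j) = 1" using that(2) vj n1 by simp
      then have "p ! j = 0" by (simp add: eA_def split: if_splits)
      then show ?thesis unfolding 1 by (intro tms_eval[OF lp j]) (simp_all add: eA_def eB_def n1)
    next
      case 2
      then have "eA n (p ! j) = 0" "eB n (p ! j) \<noteq> n - 1" using that(2) vj n1 by simp_all
      then have pj2: "0 < p ! j" "p ! j < n" using hp[OF j] by (simp_all add: eA_def eB_def split: if_splits)
      have "eval_trm n ?v (TS (TVar (k + j))) = p ! j" using vj pj2 by (simp add: eB_def Let_def)
      then show ?thesis unfolding 2 using pj2 by (intro tms_eval[OF lp j]) (simp_all add: eA_def eB_def n1)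
    next
      case 3
      then have "eA n (p ! j) = 0" "eB n (p ! j) = n - 1" using that(2) vj n1 by simp_all
      then have pj3: "p ! j = n" using hp[OF j] by (simp_all add: eA_def eB_def split: if_splits)
      then show ?thesis unfolding 3 by (intro tms_eval[OF lp j]) (simp_all add: eA_def eB_def n1)
    qed
  qed
  have only: "(c', ts') \<in> set (bcases k j)"
    if "(c', ts') \<in> set (fst (succ_cases Qn k))" "sat x ?v c'" for c' ts'
  proof -
    from that(1) consider j' where "j' < k" "(c', ts') \<in> set (bcases k j')" | "(c', ts') = scase Qn k"
      by (auto simp: succ_cases_def)
    then show ?thesis
    proof cases
      case (1 j')
      then have pre': "sat x ?v (pre j')" and nm: "p ! j' \<noteq> Suc n"
        using that(2) v_enc[OF lp 1(1)] n_ge by (auto simp: bcases_def eA_def)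
      have "\<forall>i<j'. p ! i = Suc n" using pre' pre_sat[OF c] 1 by simp
      then have "\<not> j < j'" using pj by auto
      moreover have "\<not> j' < j" using nm pj by auto
      ultimately show ?thesis using 1 by (metis nat_neq_iff)
    next
      case 2
      then have "sat x ?v (pre k)" using that(2) by (simp add: scase_def)
      then have "p ! j = Suc n" using pre_sat[OF c] j by simp
      then show ?thesis using pj by simp
    qed
  qed
  have ex: "\<exists>c' ts'. (c', ts') \<in> set (bcases k j) \<and> sat x ?v c'"
  proof -
    have "p ! j = 0 \<or> (0 < p ! j \<and> p ! j < n) \<or> p ! j = n" using pj by linarith
    then show ?thesis
    proof (elim disjE)
      assume "p ! j = 0" then show ?thesis using prej vj n_ge
        by (intro exI[of _ "FConj (pre j) (FEq (TVar j) (cst 1))"] exI[of _ "tms k j TMin TMin"])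
           (simp add: bcases_def eA_def)
    next
      assume a: "0 < p ! j \<and> p ! j < n" then show ?thesis using prej vj n_ge
        by (intro exI[of _ "FConj (pre j) (FConj (FEq (TVar j) TMin) (FNeg (FEq (TVar (k + j)) TMax)))"]
            exI[of _ "tms k j TMin (TS (TVar (k + j)))"]) (auto simp: bcases_def eA_def eB_def)
    next
      assume a: "p ! j = n" then show ?thesis using prej vj n_ge
        by (intro exI[of _ "FConj (pre j) (FConj (FEq (TVar j) TMin) (FEq (TVar (k + j)) TMax))"]
            exI[of _ "tms k j (cst 2) TMin"]) (auto simp: bcases_def eA_def eB_def)
    qed
  qed
  then obtain c0 ts0 where c0: "(c0, ts0) \<in> set (bcases k j)" "sat x ?v c0" by blast
  have c0in: "(c0, ts0) \<in> set (fst (succ_cases Qn k))" using c0 j by (auto simp: succ_cases_def)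
  show ?thesis
    apply (subst prod.collapse[symmetric, of "succ_cases Qn k"])
    apply (rule eval_cases_unique[OF c0in c0(2)])
    using ok only by auto
qed


lemma Qn_pos: "0 < Qn"
  using sq by (cases qs) auto

lemma only_scase:
  assumes c: "(q, p) \<in> cfgs k n" and pm: "\<forall>i<k. p ! i = Suc n"
    and "(c', ts') \<in> set (fst (succ_cases Qn k))" "sat x (asg (enc qs n (q, p))) c'"
  shows "(c', ts') = scase Qn k"
proof -
  have lp: "length p = k" using c by (simp add: cfgs_def)
  from assms(3) consider j' where "j' < k" "(c', ts') \<in> set (bcases k j')" | "(c', ts') = scase Qn k"
    by (auto simp: succ_cases_def)
  then show ?thesis
  proof cases
    case (1 j')
    then have "eA n (p ! j') \<noteq> 2"
      using assms(4) v_enc[OF lp 1(1)] n_ge by (auto simp: bcases_def)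
    then show ?thesis using pm 1 by (simp add: eA_def)
  qed
qed

lemma S2:
  assumes c: "(q, p) \<in> cfgs k n" and pm: "\<forall>i<k. p ! i = Suc n" and cq: "Suc (code qs q) < Qn"
  shows "eval_cases x (asg (enc qs n (q, p))) (succ_cases Qn k) = enc qs n (qs ! Suc (code qs q), replicate k 0)"
proof -
  let ?v = "asg (enc qs n (q, p))"
  have lp: "length p = k" using c by (simp add: cfgs_def)
  have n1: "1 < n" "Suc (code qs q) < n" using n_ge cq by auto
  have sat: "sat x ?v (fst (scase Qn k))"
    using pre_sat[OF c] pm v_enc_last[OF lp] cq n_ge by (auto simp: scase_def)
  have ev: "map (eval_trm n ?v) (snd (scase Qn k :: 'a fm \<times> trm list)) = enc qs n (qs ! Suc (code qs q), replicate k 0)"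
    using v_enc_last[OF lp] n1 cq by (simp add: scase_def enc_def eA_def eB_def Let_def)
  have inn0: "scase Qn k \<in> set (fst (succ_cases Qn k))" by (simp add: succ_cases_def)
  then have inn: "(fst (scase Qn k :: 'a fm \<times> trm list), snd (scase Qn k :: 'a fm \<times> trm list)) \<in> set (fst (succ_cases Qn k))" by simp
  show ?thesis
    apply (rule eval_cases_unique'[OF inn sat])
    using only_scase[OF c pm] ev by fastforce
qed

lemma S3:
  assumes c: "(q, p) \<in> cfgs k n" and pm: "\<forall>i<k. p ! i = Suc n" and cq: "code qs q = Qn - 1"
  shows "eval_cases x (asg (enc qs n (q, p))) (succ_cases Qn k) = enc qs n (q, p)"
proof -
  let ?v = "asg (enc qs n (q, p))"
  have lp: "length p = k" using c by (simp add: cfgs_def)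
  have none: "\<not> sat x ?v c'" if "(c', ts') \<in> set (fst (succ_cases Qn k))" for c' ts'
  proof
    assume s: "sat x ?v c'"
    then have "(c', ts') = scase Qn k" using only_scase[OF c pm that] by simp
    then show False using s v_enc_last[OF lp] cq n_ge by (auto simp: scase_def)
  qed
  have "eval_cases x ?v (succ_cases Qn k) = map (eval_trm n ?v) (snd (succ_cases Qn k :: 'a cases))"
    by (rule eval_cases_none') (use none in auto)
  also have "\<dots> = enc qs n (q, p)"
  proof (rule nth_equalityI)
    show "length (map (eval_trm n ?v) (snd (succ_cases Qn k))) = length (enc qs n (q, p))"
      using lp by (simp add: succ_cases_def)
    fix i assume "i < length (map (eval_trm n ?v) (snd (succ_cases Qn k)))"
    then have "i < 2 * k + 1" by (simp add: succ_cases_def)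
    then show "map (eval_trm n ?v) (snd (succ_cases Qn k)) ! i = enc qs n (q, p) ! i"
      using lp by (simp add: succ_cases_def del: upt_Suc)
  qed
  finally show ?thesis by simp
qed

definition ms :: "nat list" where "ms = replicate k (Suc (Suc n)) @ [Qn]"
definition cd :: "'q \<times> nat list \<Rightarrow> nat list" where "cd c = snd c @ [code qs (fst c)]"
definition dc :: "nat list \<Rightarrow> 'q \<times> nat list" where "dc ds = (qs ! (ds ! k), take k ds)"

lemma length_ms[simp]: "length ms = Suc k" by (simp add: ms_def)

lemma ms_nth: "i < k \<Longrightarrow> ms ! i = Suc (Suc n)" "ms ! k = Qn"
  by (simp_all add: ms_def nth_append)

lemma cd_valid: "c \<in> cfgs k n \<Longrightarrow> list_all2 (<) (cd c) ms"
  by (auto simp: cfgs_def cd_def ms_def list_all2_append list_all2_conv_all_nth nth_append less_Suc_eq_le)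

lemma dc_cd: "c \<in> cfgs k n \<Longrightarrow> dc (cd c) = c"
  by (auto simp: cfgs_def cd_def dc_def nth_append)

lemma dc_valid: "list_all2 (<) ds ms \<Longrightarrow> dc ds \<in> cfgs k n \<and> cd (dc ds) = ds"
proof -
  assume a: "list_all2 (<) ds ms"
  then have l: "length ds = Suc k" by (simp add: list_all2_lengthD)
  have lt: "ds ! i < ms ! i" if "i < Suc k" for i using a that l by (simp add: list_all2_conv_all_nth)
  have "dc ds \<in> cfgs k n"
  proof -
    have "j \<le> Suc n" if "j \<in> set (take k ds)" for j
    proof -
      from that obtain i where "i < k" "j = ds ! i" using l by (auto simp: in_set_conv_nth)
      then show ?thesis using lt[of i] ms_nth by simp
    qed
    then show ?thesis using l by (simp add: dc_def cfgs_def)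
  qed
  moreover have "cd (dc ds) = ds"
  proof -
    have "ds ! k < Qn" using lt[of k] ms_nth by simp
    then have "code qs (qs ! (ds ! k)) = ds ! k" by simp
    then show ?thesis using l unfolding cd_def dc_def
      by (metis fst_conv snd_conv take_Suc_conv_app_nth lessI take_all order_refl)
  qed
  ultimately show ?thesis by simp
qed

end

context E begin

lemma N_pos: "0 < prod_list ms"
  using Qn_pos by (simp add: ms_def)

lemma Ssucc:
  assumes c: "c \<in> cfgs k n" and lt: "Suc (val ms (cd c)) < prod_list ms"
  shows "eval_cases x (asg (enc qs n c)) (succ_cases Qn k) = enc qs n (dc (inc ms (cd c)))"
proof -
  obtain q p where cc: "c = (q, p)" by (cases c)
  have lp: "length p = k" using c cc by (simp add: cfgs_def)
  have hp: "p ! i \<le> Suc n" if "i < k" for i using c cc lp that by (auto simp: cfgs_def)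
  have cdc: "cd c = p @ [code qs q]" using cc by (simp add: cd_def)
  have cdn: "cd c ! i = p ! i" if "i < k" for i using cdc lp that by (simp add: nth_append)
  have cdk: "cd c ! k = code qs q" using cdc lp by (simp add: nth_append)
  have lcd: "length (cd c) = Suc k" using cdc lp by simp
  show ?thesis
  proof (cases "\<exists>i<k. p ! i \<noteq> Suc n")
    case True
    define j where "j = (LEAST i. i < k \<and> p ! i \<noteq> Suc n)"
    have j: "j < k" "p ! j \<noteq> Suc n" using LeastI_ex[OF True] unfolding j_def by auto
    have pre: "\<forall>i<j. p ! i = Suc n" using not_less_Least j(1) unfolding j_def
      by (metis (mono_tags, lifting) less_trans)
    have pjn: "p ! j \<le> n" using hp[OF j(1)] j(2) by simp
    have "inc ms (cd c) = replicate j 0 @ Suc (cd c ! j) # drop (Suc j) (cd c)"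
    proof (rule inc_at)
      show "j < length (cd c)" using lcd j by simp
      show "length ms = length (cd c)" using lcd by simp
      show "\<forall>i<j. Suc (cd c ! i) = ms ! i" using pre cdn ms_nth j by simp
      show "Suc (cd c ! j) < ms ! j" using cdn ms_nth j pjn by simp
    qed
    also have "\<dots> = pnew j p @ [code qs q]"
      using cdc cdn[OF j(1)] j lp by (simp add: pnew_def)
    finally have "dc (inc ms (cd c)) = (q, pnew j p)"
      using lp j by (simp add: dc_def nth_append)
    then show ?thesis using S1[OF c[unfolded cc] j(1) pre pjn] cc by simp
  next
    case False
    then have pm: "\<forall>i<k. p ! i = Suc n" by auto
    have cq: "Suc (code qs q) < Qn"
    proof (rule ccontr)
      assume "\<not> Suc (code qs q) < Qn"
      then have "Suc (code qs q) = Qn" using code_lt[of q] by linarith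
      then have "list_all2 (\<lambda>d m. Suc d = m) (cd c) ms"
        using pm cdn cdk ms_nth lcd by (auto simp: list_all2_conv_all_nth less_Suc_eq)
      from val_max[OF this] lt show False by simp
    qed
    have "inc ms (cd c) = replicate k 0 @ Suc (cd c ! k) # drop (Suc k) (cd c)"
    proof (rule inc_at)
      show "k < length (cd c)" using lcd by simp
      show "length ms = length (cd c)" using lcd by simp
      show "\<forall>i<k. Suc (cd c ! i) = ms ! i" using pm cdn ms_nth by simp
      show "Suc (cd c ! k) < ms ! k" using cdk ms_nth cq by simp
    qed
    also have "\<dots> = replicate k 0 @ [Suc (code qs q)]" using cdk lcd by simp
    finally have "dc (inc ms (cd c)) = (qs ! Suc (code qs q), replicate k 0)"
      by (simp add: dc_def nth_append)
    then show ?thesis using S2[OF c[unfolded cc] pm cq] cc by simp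
  qed
qed

lemma succ_on:
  "successor_on (enc qs n ` cfgs k n) (enc qs n (qs ! 0, replicate k 0))
     (enc qs n (qs ! (Qn - 1), replicate k (Suc n))) (\<lambda>as. eval_cases x (asg as) (succ_cases Qn k))"
proof -
  define N where "N = prod_list ms"
  define L where "L = map (\<lambda>i. enc qs n (dc (dig ms i))) [0..<N]"
  have Np: "0 < N" using N_pos by (simp add: N_def)
  have dv: "list_all2 (<) (dig ms i) ms" if "i < N" for i using dig_valid that by (simp add: N_def)
  have dcin: "dc (dig ms i) \<in> cfgs k n" "cd (dc (dig ms i)) = dig ms i" if "i < N" for i
    using dc_valid[OF dv[OF that]] by auto
  have vd: "val ms (dig ms i) = i" if "i < N" for i using val_dig that by (simp add: N_def)
  have dist: "distinct L"
    unfolding L_def distinct_map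
  proof
    show "distinct [0..<N]" by simp
    show "inj_on (\<lambda>i. enc qs n (dc (dig ms i))) (set [0..<N])"
    proof (rule inj_onI)
      fix i i' assume i: "i \<in> set [0..<N]" "i' \<in> set [0..<N]"
        and e: "enc qs n (dc (dig ms i)) = enc qs n (dc (dig ms i'))"
      then have "dc (dig ms i) = dc (dig ms i')" using enc_inj dcin by auto
      then have "cd (dc (dig ms i)) = cd (dc (dig ms i'))" by simp
      then have "dig ms i = dig ms i'" using dcin i by simp
      then show "i = i'" using vd i by (metis atLeastLessThan_iff set_upt)
    qed
  qed
  have setL: "set L = enc qs n ` cfgs k n"
  proof
    show "set L \<subseteq> enc qs n ` cfgs k n" using dcin by (auto simp: L_def)
    show "enc qs n ` cfgs k n \<subseteq> set L"
    proof
      fix as assume "as \<in> enc qs n ` cfgs k n"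
      then obtain c where c: "c \<in> cfgs k n" "as = enc qs n c" by auto
      have "val ms (cd c) < N" using val_bound[OF cd_valid[OF c(1)]] by (simp add: N_def)
      moreover have "dc (dig ms (val ms (cd c))) = c" using dig_val[OF cd_valid[OF c(1)]] dc_cd[OF c(1)] by simp
      ultimately show "as \<in> set L" using c unfolding L_def by (metis (no_types, lifting) atLeastLessThan_iff image_eqI list.set_map set_upt zero_le)
    qed
  qed
  have lenL: "length L = N" by (simp add: L_def)
  have nth_L: "L ! i = enc qs n (dc (dig ms i))" if "i < N" for i using that by (simp add: L_def)
  have hdL: "hd L = enc qs n (qs ! 0, replicate k 0)"
  proof -
    have "L \<noteq> []" using Np lenL by auto
    then have "hd L = L ! 0" by (simp add: hd_conv_nth)
    also have "\<dots> = enc qs n (dc (dig ms 0))" using nth_L Np by simp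
    also have "dig ms 0 = replicate (Suc k) 0" by (simp add: dig_zero)
    moreover have "dc (replicate (Suc k) 0) = (qs ! 0, replicate k (0::nat))"
      unfolding dc_def by (simp only: nth_replicate take_replicate lessI min_absorb1 le_SucI order_refl)
    ultimately show ?thesis by simp
  qed
  define amax where "amax = replicate k (Suc n) @ [Qn - 1]"
  have amax_m: "list_all2 (\<lambda>d m. Suc d = m) amax ms"
    using Qn_pos by (auto simp: amax_def ms_def list_all2_append list_all2_conv_all_nth nth_append less_Suc_eq)
  have amax_v: "list_all2 (<) amax ms"
    using amax_m by (auto simp: list_all2_conv_all_nth)
  have "Suc (val ms amax) = N" using val_max[OF amax_m] by (simp add: N_def)
  then have "N - 1 = val ms amax" by simp
  then have damax: "dig ms (N - 1) = amax" using dig_val[OF amax_v] by simp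
  have dcamax: "dc amax = (qs ! (Qn - 1), replicate k (Suc n))" by (simp add: dc_def amax_def nth_append)
  have lastL: "last L = enc qs n (qs ! (Qn - 1), replicate k (Suc n))"
  proof -
    have "L \<noteq> []" using Np lenL by auto
    then have "last L = L ! (N - 1)" using lenL by (simp add: last_conv_nth)
    also have "\<dots> = enc qs n (dc (dig ms (N - 1)))" using nth_L Np by simp
    finally show ?thesis using damax dcamax by simp
  qed
  have step: "eval_cases x (asg (L ! i)) (succ_cases Qn k) = L ! Suc i" if "Suc i < length L" for i
  proof -
    have i: "i < N" "Suc i < N" using that lenL by auto
    have "eval_cases x (asg (L ! i)) (succ_cases Qn k) = enc qs n (dc (inc ms (cd (dc (dig ms i)))))"
      using Ssucc[OF dcin(1)[OF i(1)]] dcin(2)[OF i(1)] vd[OF i(1)] i nth_L by (simp add: N_def)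
    also have "\<dots> = enc qs n (dc (dig ms (Suc i)))" using dcin(2)[OF i(1)] dig_Suc i by (simp add: N_def)
    finally show ?thesis using nth_L i by simp
  qed
  have fix_mx: "eval_cases x (asg (enc qs n (qs ! (Qn - 1), replicate k (Suc n)))) (succ_cases Qn k)
      = enc qs n (qs ! (Qn - 1), replicate k (Suc n))"
  proof (rule S3)
    show "(qs ! (Qn - 1), replicate k (Suc n)) \<in> cfgs k n" by (simp add: cfgs_def)
    show "\<forall>i<k. replicate k (Suc n) ! i = Suc n" by simp
    show "code qs (qs ! (Qn - 1)) = Qn - 1" using Qn_pos by simp
  qed
  show ?thesis unfolding successor_on_def
    apply (rule exI[of _ L])
    using dist setL Np lenL hdL lastL step fix_mx by auto
qed

end

definition ctm :: "'q list \<Rightarrow> nat \<Rightarrow> nat \<Rightarrow> 'q \<Rightarrow> trm list" where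
  "ctm qs k a q = replicate k (cst a) @ replicate k TMin @ [cst (code qs q)]"

definition the_interp :: "'q list \<Rightarrow> nat \<Rightarrow> ('q \<times> 'a tsym list \<times> 'q \<times> int list) list \<Rightarrow> 'q \<Rightarrow> 'q \<Rightarrow> 'a interp" where
  "the_interp qs k tlist s t = \<lparr> idim = 2 * k + 1, idom = domf (length qs) k, iedge = edgef qs k tlist,
     i_s = ([], ctm qs k 1 s), i_t = ([], ctm qs k 1 t),
     i_min = ([], ctm qs k 1 (qs ! 0)), i_max = ([], ctm qs k 2 (qs ! (length qs - 1))),
     i_succ = succ_cases (length qs) k \<rparr>"

lemma fv_domf: "fv (domf Qn k :: 'a fm) \<subseteq> {..<2 * k + 1}"
  by (auto simp: domf_def blkdom_def)

lemma fv_rd: "j \<in> fv (rd k s i :: 'a fm) \<Longrightarrow> i < k \<Longrightarrow> j < 2 * (2 * k + 1)"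
  by (cases s) auto

lemma fv_mv: "j \<in> fv (mv k d i :: 'a fm) \<Longrightarrow> i < k \<Longrightarrow> j < 2 * (2 * k + 1)"
  by (auto simp: mv_def Let_def split: if_splits)

lemma fv_edgef: "fv (edgef qs k tlist :: 'a fm) \<subseteq> {..<2 * (2 * k + 1)}"
proof -
  have h: "j < 2 * (2 * k + 1)" if "j \<in> fv (trf qs k \<tau> :: 'a fm)" for \<tau> j
  proof -
    obtain q a q' d where t: "\<tau> = (q, a, q', d)" by (cases \<tau>) auto
    show ?thesis using that unfolding t trf_def
      by (auto dest: fv_rd fv_mv)
  qed
  show ?thesis unfolding edgef_def fv_BigOr using h by auto
qed

lemma qf_edgef: "qfree (edgef qs k tlist)"
proof -
  have "qfree (rd k s i)" for s i by (cases s) auto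
  moreover have "qfree (mv k d i)" for d i by (simp add: mv_def Let_def)
  ultimately show ?thesis by (auto simp: edgef_def trf_def split: prod.splits)
qed

lemma qf_domf: "qfree (domf Qn k)" by (simp add: domf_def blkdom_def)

lemma pre_fv: "i \<in> fv (pre j :: 'a fm) \<Longrightarrow> i < j" by (auto simp: pre_def)
lemma pre_qf: "qfree (pre j)" by (simp add: pre_def)

lemma tms_len: "length (tms k j NA NB) = 2 * k + 1" by (simp add: tms_def)

lemma tms_fv: "j < k \<Longrightarrow> fv_trm NA \<subseteq> {..<2 * k + 1} \<Longrightarrow> fv_trm NB \<subseteq> {..<2 * k + 1} \<Longrightarrow>
   t \<in> set (tms k j NA NB) \<Longrightarrow> fv_trm t \<subseteq> {..<2 * k + 1}"
  by (auto simp: tms_def)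

lemma succ_wf: "cases_wf (2 * k + 1) (2 * k + 1) (succ_cases Qn k :: 'a cases)"
proof -
  have b: "fv c \<subseteq> {..<2 * k + 1} \<and> length ts = 2 * k + 1 \<and> (\<forall>t\<in>set ts. fv_trm t \<subseteq> {..<2 * k + 1})"
    if j: "j < k" and "(c, ts) \<in> set (bcases k j :: ('a fm \<times> trm list) list)" for j c ts
  proof -
    have t1: "\<forall>t\<in>set (tms k j TMin TMin). fv_trm t \<subseteq> {..<2 * k + 1}"
      using tms_fv[OF j, of TMin TMin] by simp
    have t2: "\<forall>t\<in>set (tms k j TMin (TS (TVar (k + j)))). fv_trm t \<subseteq> {..<2 * k + 1}"
      using tms_fv[OF j, of TMin "TS (TVar (k + j))"] j by simp
    have t3: "\<forall>t\<in>set (tms k j (cst 2) TMin). fv_trm t \<subseteq> {..<2 * k + 1}"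
      using tms_fv[OF j, of "cst 2" TMin] by simp
    have "fv c \<subseteq> {..<2 * k + 1}" using that by (auto simp: bcases_def dest!: pre_fv)
    then show ?thesis using that t1 t2 t3 by (auto simp: bcases_def tms_len)
  qed
  have s: "fv c \<subseteq> {..<2 * k + 1} \<and> length ts = 2 * k + 1 \<and> (\<forall>t\<in>set ts. fv_trm t \<subseteq> {..<2 * k + 1})"
    if "(c, ts) = (scase Qn k :: 'a fm \<times> trm list)" for c ts
    using that by (auto simp: scase_def dest!: pre_fv)
  show ?thesis unfolding cases_wf_def succ_cases_def using b s by fastforce
qed

lemma succ_qf: "cases_qf (succ_cases Qn k)"
  by (auto simp: cases_qf_def succ_cases_def bcases_def scase_def pre_qf)

lemma ctm_wf: "cases_wf (2 * k + 1) 0 ([], ctm qs k a q)"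
  by (auto simp: cases_wf_def ctm_def)

lemma interp_wf_the: "interp_wf (the_interp qs k tlist s t :: 'a interp)"
  unfolding interp_wf_def the_interp_def interp.select_convs
  by (intro conjI fv_domf fv_edgef ctm_wf succ_wf)

lemma interp_qf_the: "interp_qf (the_interp qs k tlist s t :: 'a interp)"
  unfolding interp_qf_def the_interp_def interp.select_convs
  by (intro conjI qf_domf qf_edgef succ_qf) (simp_all add: cases_qf_def)

context E begin

lemma ctm_eval: "iconst ([], ctm qs k 1 q) x = enc qs n (q, replicate k 0)"
  using n_ge by (simp add: iconst_def eval_cases_def ctm_def enc_def eA_def eB_def)

lemma ctm_eval2: "iconst ([], ctm qs k 2 (qs ! (Qn - 1))) x = enc qs n (qs ! (Qn - 1), replicate k (Suc n))"
  using n_ge by (simp add: iconst_def eval_cases_def ctm_def enc_def eA_def eB_def)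

end

theorem theorem2:
  fixes M :: "('q::finite, 'a::finite) nmfa"
  assumes "nmfa_wf M"
  shows "\<exists>\<pi> :: 'a interp. interp_wf \<pi> \<and> interp_qf \<pi> \<and>
    (\<exists>N. \<forall>x :: 'a list. length x \<ge> N \<longrightarrow>
       two_pointed_iso (idomain \<pi> x) (iE \<pi> x) (iconst (i_s \<pi>) x) (iconst (i_t \<pi>) x)
                       (configs M x) (conf_edges M x) (init_conf M) (final_conf M) \<and>
       successor_on (idomain \<pi> x) (iconst (i_min \<pi>) x) (iconst (i_max \<pi>) x) (iS \<pi> x))"
proof -
  obtain qs :: "'q list" where qs: "distinct qs" "set qs = UNIV"
    using finite_distinct_list[OF finite_UNIV] by metis
  define k where "k = heads M"
  have fa: "finite (UNIV :: 'a tsym set)"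
  proof -
    have e: "(UNIV :: 'a tsym set) = {LEnd, REnd} \<union> range Sym" by (auto intro: tsym.exhaust)
    have "finite ({LEnd, REnd} \<union> range (Sym :: 'a \<Rightarrow> 'a tsym))" by simp
    then show ?thesis by (subst e)
  qed
  have "trans M \<subseteq> UNIV \<times> {a. set a \<subseteq> UNIV \<and> length a = k} \<times> UNIV \<times> {d. set d \<subseteq> {-1, 0, 1} \<and> length d = k}"
    using assms unfolding nmfa_wf_def k_def by fastforce
  moreover have "finite ((UNIV :: 'q set) \<times> {a :: 'a tsym list. set a \<subseteq> UNIV \<and> length a = k} \<times> (UNIV :: 'q set) \<times> {d :: int list. set d \<subseteq> {-1, 0, 1} \<and> length d = k})"
    using fa by (intro finite_cartesian_product finite_lists_length_eq) auto
  ultimately have "finite (trans M)" by (rule finite_subset)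
  then obtain tlist where tl: "set tlist = trans M" using finite_list by blast
  define \<pi> where "\<pi> = (the_interp qs k tlist (start M) (final M) :: 'a interp)"
  have main: "two_pointed_iso (idomain \<pi> x) (iE \<pi> x) (iconst (i_s \<pi>) x) (iconst (i_t \<pi>) x)
                       (configs M x) (conf_edges M x) (init_conf M) (final_conf M) \<and>
       successor_on (idomain \<pi> x) (iconst (i_min \<pi>) x) (iconst (i_max \<pi>) x) (iS \<pi> x)"
    if lx: "length x \<ge> length qs + 3" for x :: "'a list"
  proof -
    interpret E qs k x using qs lx by unfold_locales auto
    have dom: "idomain \<pi> x = enc qs n ` cfgs k n"
      unfolding idomain_def \<pi>_def the_interp_def using enc_image by simp
    have cf: "configs M x = cfgs k n" by (simp add: configs_cfgs k_def)
    have bij: "bij_betw (enc qs n) (cfgs k n) (idomain \<pi> x)"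
      using bij_enc dom enc_image by simp
    define f where "f = the_inv_into (cfgs k n) (enc qs n)"
    have bf: "bij_betw f (idomain \<pi> x) (cfgs k n)" unfolding f_def by (rule bij_betw_the_inv_into[OF bij])
    have finv: "f (enc qs n c) = c" if "c \<in> cfgs k n" for c
      unfolding f_def using bij that by (simp add: bij_betw_def the_inv_into_f_f)
    have ic: "init_conf M \<in> cfgs k n" "final_conf M \<in> cfgs k n"
      by (auto simp: init_conf_def final_conf_def cfgs_def k_def)
    have s: "iconst (i_s \<pi>) x = enc qs n (init_conf M)" "iconst (i_t \<pi>) x = enc qs n (final_conf M)"
      using ctm_eval by (simp_all add: \<pi>_def the_interp_def init_conf_def final_conf_def k_def)
    have edges: "(a, b) \<in> iE \<pi> x \<longleftrightarrow> (f a, f b) \<in> conf_edges M x"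
      if ab: "a \<in> idomain \<pi> x" "b \<in> idomain \<pi> x" for a b
    proof -
      obtain c c' where c: "c \<in> cfgs k n" "c' \<in> cfgs k n" "a = enc qs n c" "b = enc qs n c'"
        using ab dom by auto
      obtain q p q' p' where cc: "c = (q, p)" "c' = (q', p')" by (cases c, cases c')
      have "(a, b) \<in> iE \<pi> x \<longleftrightarrow> sat x (asg (a @ b)) (edgef qs k tlist)"
        using ab by (simp add: iE_def \<pi>_def the_interp_def)
      also have "\<dots> \<longleftrightarrow> (c, c') \<in> conf_edges M x"
        using edge_sem[OF assms k_def[symmetric] tl, of q p q' p'] c cc by simp
      finally show ?thesis using finv c by simp
    qed
    have iso: "two_pointed_iso (idomain \<pi> x) (iE \<pi> x) (iconst (i_s \<pi>) x) (iconst (i_t \<pi>) x)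
                       (configs M x) (conf_edges M x) (init_conf M) (final_conf M)"
      unfolding two_pointed_iso_def cf
    proof (intro conjI exI[of _ f] ballI)
      show "iconst (i_s \<pi>) x \<in> idomain \<pi> x" "iconst (i_t \<pi>) x \<in> idomain \<pi> x"
        using s ic dom by auto
      show "bij_betw f (idomain \<pi> x) (cfgs k n)" by (rule bf)
      show "f (iconst (i_s \<pi>) x) = init_conf M" "f (iconst (i_t \<pi>) x) = final_conf M"
        using s ic finv by auto
      fix a b assume "a \<in> idomain \<pi> x" "b \<in> idomain \<pi> x"
      then show "(a, b) \<in> iE \<pi> x \<longleftrightarrow> (f a, f b) \<in> conf_edges M x" by (rule edges)
    qed
    have mn: "iconst (i_min \<pi>) x = enc qs n (qs ! 0, replicate k 0)"
      using ctm_eval by (simp add: \<pi>_def the_interp_def)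
    have mx: "iconst (i_max \<pi>) x = enc qs n (qs ! (Qn - 1), replicate k (Suc n))"
      using ctm_eval2 by (simp add: \<pi>_def the_interp_def)
    have sS: "iS \<pi> x = (\<lambda>as. eval_cases x (asg as) (succ_cases Qn k))"
      by (simp add: iS_def \<pi>_def the_interp_def fun_eq_iff)
    have "successor_on (idomain \<pi> x) (iconst (i_min \<pi>) x) (iconst (i_max \<pi>) x) (iS \<pi> x)"
      unfolding dom mn mx sS by (rule succ_on)
    then show ?thesis using iso by simp
  qed
  show ?thesis
  proof (rule exI[of _ \<pi>], intro conjI)
    show "interp_wf \<pi>" unfolding \<pi>_def by (rule interp_wf_the)
    show "interp_qf \<pi>" unfolding \<pi>_def by (rule interp_qf_the)
    show "\<exists>N. \<forall>x :: 'a list. length x \<ge> N \<longrightarrow>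
       two_pointed_iso (idomain \<pi> x) (iE \<pi> x) (iconst (i_s \<pi>) x) (iconst (i_t \<pi>) x)
                       (configs M x) (conf_edges M x) (init_conf M) (final_conf M) \<and>
       successor_on (idomain \<pi> x) (iconst (i_min \<pi>) x) (iconst (i_max \<pi>) x) (iS \<pi> x)"
      by (intro exI[of _ "length qs + 3"] allI impI main)
  qed
qed


end
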